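(* Let $n\ge 1$ and $M\ge 1$ be integers, let $\mathcal{X}=\{x^{(1)},\dots,x^{(L)}\}\subset\mathbb{C}$ be a finite set of $L$ channel input symbols, let $\sigma^2>0$, let $g:\mathbb{C}\to[0,+\infty]$ be a measurable function, let $\epsilon>0$, $B\in\mathbb{R}$ and $\delta<1$. Let $\mathscr{C}$ be an $(n,M,\epsilon,B,\delta)$-code (as defined in the context). Then $$B\le \frac{1}{1-\delta}\sum_{\ell=1}^{L}P_{\mathscr{C}}(x^{(\ell)})\,\mathbb{E}\big[g(x^{(\ell)}+W)\big],$$ where $W$ is a complex circularly symmetric Gaussian random variable whose real and imaginary parts have zero means and variances $\sigma^2/2$.
   Context: Channel: for an input $\boldsymbol{x}=(x_1,\dots,x_n)\in\mathbb{C}^n$ the outputs are $\boldsymbol{Y}=\boldsymbol{x}+\boldsymbol{N}_1$ (at the information receiver) and $\boldsymbol{Z}=\boldsymbol{x}+\boldsymbol{N}_2$ (at the energy harvester), where all $2n$ components of $\boldsymbol{N}_1,\boldsymbol{N}_2$ are i.i.d. complex circularly symmetric Gaussian random variables whose real and imaginary parts are independent with zero mean and variance $\sigma^2/2$. Thus each output coordinate has conditional density $f_{Y|X}(y|x)=\frac{1}{\pi\sigma^2}\exp(-|y-x|^2/\sigma^2)$ and $f_{\boldsymbol{Y}|\boldsymbol{X}}(\boldsymbol{y}|\boldsymbol{x})=\prod_{t=1}^n f_{Y|X}(y_t|x_t)$ (same for $\boldsymbol{Z}$). An $(n,M)$-code is a system $\mathscr{C}=\{(\boldsymbol{u}(1),\mathcal{D}_1),\dots,(\boldsymbol{u}(M),\mathcal{D}_M)\}$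 with codewords $\boldsymbol{u}(i)=(u_1(i),\dots,u_n(i))\in\mathcal{X}^n$ satisfying a peak-power constraint $|u_t(i)|\le P$ for a fixed $P>0$, and pairwise disjoint measurable decoding sets $\mathcal{D}_i\subseteq\mathbb{C}^n$; here $M\le 2^{n\lfloor\log_2 L\rfloor}$. The decoding error probability of message $i$ is $\gamma_i(\mathscr{C})=1-\int_{\mathcal{D}_i}f_{\boldsymbol{Y}|\boldsymbol{X}}(\boldsymbol{y}|\boldsymbol{u}(i))\,d\boldsymbol{y}$ and $\gamma(\mathscr{C})=\frac1M\sum_i\gamma_i(\mathscr{C})$; the code is an $(n,M,\epsilon)$-code if $\gamma(\mathscr{C})<\epsilon$. With $\bar g(\boldsymbol{z})=\frac1n\sum_{t=1}^n g(z_t)$, the energy outage probability of message $i$ is $\theta_i(\mathscr{C},B)=\Pr[\bar g(\boldsymbol{Z})<B\mid \boldsymbol{X}=\boldsymbol{u}(i)]$ and $\theta(\mathscr{C},B)=\frac1M\sum_i\theta_i(\mathscr{C},B)$; an $(n,M,\epsilon)$-code is an $(n,M,\epsilon,B,\delta)$-code if also $\theta(\mathscr{C},B)<\delta$. Types: $P_{\boldsymbol{u}(i)}(x^{(\ell)})=\frac1n\sum_{t=1}^n\mathbf{1}\{u_t(i)=x^{(\ell)}\}$ and $P_{\mathscr{C}}(x^{(\ell)})=\frac1M\sum_{i=1}^M P_{\boldsymbol{u}(i)}(x^{(\ell)})$. *)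

theory Defs
  imports "HOL-Analysis.Analysis"
begin

text \<open>Density of a complex circularly symmetric Gaussian with centre x and
  total variance s2 (real and imaginary parts independent with variance s2/2).\<close>
definition cn_density :: "real \<Rightarrow> complex \<Rightarrow> complex \<Rightarrow> real" where
  "cn_density s2 x y = 1 / (pi * s2) * exp (- ((cmod (y - x)) ^ 2) / s2)"

definition chan_density :: "real \<Rightarrow> nat \<Rightarrow> (nat \<Rightarrow> complex) \<Rightarrow> (nat \<Rightarrow> complex) \<Rightarrow> real" where
  "chan_density s2 n x y = (\<Prod>t\<in>{1..n}. cn_density s2 (x t) (y t))"

definition cspace :: "nat \<Rightarrow> (nat \<Rightarrow> complex) measure" where
  "cspace n = PiM {1..n} (\<lambda>_. (lborel :: complex measure))"

text \<open>Output distribution (of Y, and likewise of Z) given input vector x.\<close>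
definition chan_out :: "real \<Rightarrow> nat \<Rightarrow> (nat \<Rightarrow> complex) \<Rightarrow> (nat \<Rightarrow> complex) measure" where
  "chan_out s2 n x = density (cspace n) (\<lambda>y. ennreal (chan_density s2 n x y))"

definition dec_err :: "real \<Rightarrow> nat \<Rightarrow> (nat \<Rightarrow> nat \<Rightarrow> complex) \<Rightarrow> (nat \<Rightarrow> (nat \<Rightarrow> complex) set) \<Rightarrow> nat \<Rightarrow> real" where
  "dec_err s2 n u D i = 1 - measure (chan_out s2 n (u i)) (D i)"

definition avg_dec_err :: "real \<Rightarrow> nat \<Rightarrow> nat \<Rightarrow> (nat \<Rightarrow> nat \<Rightarrow> complex) \<Rightarrow> (nat \<Rightarrow> (nat \<Rightarrow> complex) set) \<Rightarrow> real" where
  "avg_dec_err s2 n M u D = (1 / real M) * (\<Sum>i\<in>{1..M}. dec_err s2 n u D i)"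

definition gbar :: "(complex \<Rightarrow> ennreal) \<Rightarrow> nat \<Rightarrow> (nat \<Rightarrow> complex) \<Rightarrow> ennreal" where
  "gbar g n z = ennreal (1 / real n) * (\<Sum>t\<in>{1..n}. g (z t))"

definition outage :: "real \<Rightarrow> nat \<Rightarrow> (complex \<Rightarrow> ennreal) \<Rightarrow> real \<Rightarrow> (nat \<Rightarrow> nat \<Rightarrow> complex) \<Rightarrow> nat \<Rightarrow> real" where
  "outage s2 n g B u i =
     measure (chan_out s2 n (u i)) {z \<in> space (cspace n). enn2ereal (gbar g n z) < ereal B}"

definition avg_outage :: "real \<Rightarrow> nat \<Rightarrow> nat \<Rightarrow> (complex \<Rightarrow> ennreal) \<Rightarrow> real \<Rightarrow> (nat \<Rightarrow> nat \<Rightarrow> complex) \<Rightarrow> real" where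
  "avg_outage s2 n M g B u = (1 / real M) * (\<Sum>i\<in>{1..M}. outage s2 n g B u i)"

text \<open>(n,M)-code over alphabet X with peak power P: codewords u i (i = 1..M),
  coordinates u i t (t = 1..n), decoding sets D i.\<close>
definition is_code :: "complex set \<Rightarrow> real \<Rightarrow> nat \<Rightarrow> nat \<Rightarrow> (nat \<Rightarrow> nat \<Rightarrow> complex) \<Rightarrow> (nat \<Rightarrow> (nat \<Rightarrow> complex) set) \<Rightarrow> bool" where
  "is_code X P n M u D \<longleftrightarrow>
     (\<forall>i\<in>{1..M}. \<forall>t\<in>{1..n}. u i t \<in> X \<and> cmod (u i t) \<le> P) \<and>
     (\<forall>i\<in>{1..M}. D i \<in> sets (cspace n)) \<and>
     disjoint_family_on D {1..M} \<and>
     real M \<le> 2 powr (real n * real_of_int \<lfloor>log 2 (real (card X))\<rfloor>)"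

definition is_err_code :: "complex set \<Rightarrow> real \<Rightarrow> real \<Rightarrow> nat \<Rightarrow> nat \<Rightarrow> real \<Rightarrow> (nat \<Rightarrow> nat \<Rightarrow> complex) \<Rightarrow> (nat \<Rightarrow> (nat \<Rightarrow> complex) set) \<Rightarrow> bool" where
  "is_err_code X P s2 n M \<epsilon> u D \<longleftrightarrow> is_code X P n M u D \<and> avg_dec_err s2 n M u D < \<epsilon>"

definition is_energy_code :: "complex set \<Rightarrow> real \<Rightarrow> real \<Rightarrow> nat \<Rightarrow> nat \<Rightarrow> real \<Rightarrow> (complex \<Rightarrow> ennreal) \<Rightarrow> real \<Rightarrow> real \<Rightarrow> (nat \<Rightarrow> nat \<Rightarrow> complex) \<Rightarrow> (nat \<Rightarrow> (nat \<Rightarrow> complex) set) \<Rightarrow> bool" where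
  "is_energy_code X P s2 n M \<epsilon> g B \<delta> u D \<longleftrightarrow>
     is_err_code X P s2 n M \<epsilon> u D \<and> avg_outage s2 n M g B u < \<delta>"

definition type_cw :: "nat \<Rightarrow> (nat \<Rightarrow> nat \<Rightarrow> complex) \<Rightarrow> nat \<Rightarrow> complex \<Rightarrow> real" where
  "type_cw n u i a = (1 / real n) * real (card {t \<in> {1..n}. u i t = a})"

definition type_code :: "nat \<Rightarrow> nat \<Rightarrow> (nat \<Rightarrow> nat \<Rightarrow> complex) \<Rightarrow> complex \<Rightarrow> real" where
  "type_code n M u a = (1 / real M) * (\<Sum>i\<in>{1..M}. type_cw n u i a)"

definition cn_measure :: "real \<Rightarrow> complex measure" where
  "cn_measure s2 = density lborel (\<lambda>w. ennreal (cn_density s2 0 w))"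

definition cn_expect :: "real \<Rightarrow> (complex \<Rightarrow> ennreal) \<Rightarrow> complex \<Rightarrow> ennreal" where
  "cn_expect s2 g a = (\<integral>\<^sup>+ w. g (a + w) \<partial>cn_measure s2)"

end

theory Submission
  imports Defs "HOL-Probability.Probability"
begin

lemma nd_prod:
  assumes "s2 > 0"
  shows "normal_density 0 (sqrt (s2/2)) (Re w) * normal_density 0 (sqrt (s2/2)) (Im w) = cn_density s2 0 w"
proof -
  have q: "(sqrt (s2/2))^2 = s2/2" using assms by simp
  have "normal_density 0 (sqrt (s2/2)) r = 1 / sqrt (pi * s2) * exp (- (r^2) / s2)" for r
    unfolding normal_density_def q by (simp add: field_simps)
  then have "normal_density 0 (sqrt (s2/2)) (Re w) * normal_density 0 (sqrt (s2/2)) (Im w)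
     = (1 / sqrt (pi * s2))^2 * (exp (- ((Re w)^2) / s2) * exp (- ((Im w)^2) / s2))"
    by (simp add: power2_eq_square)
  also have "\<dots> = 1 / (pi * s2) * exp (- ((cmod w)^2) / s2)"
    using assms by (simp add: power_divide exp_add[symmetric] cmod_power2 add_divide_distrib diff_divide_distrib)
  finally show ?thesis unfolding cn_density_def by simp
qed

lemma cn_int0:
  assumes "s2 > 0"
  shows "(\<integral>\<^sup>+ w. ennreal (cn_density s2 0 w) \<partial>(lborel :: complex measure)) = 1"
proof -
  let ?f = "\<lambda>(b::complex) r. ennreal (normal_density 0 (sqrt (s2/2)) r)"
  have "\<And>w::complex. ennreal (cn_density s2 0 w) = (\<Prod>b\<in>Basis. ?f b (w \<bullet> b))"
    by (simp add: Basis_complex_def nd_prod[OF assms, symmetric] ennreal_mult)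
  then have "(\<integral>\<^sup>+ w. ennreal (cn_density s2 0 w) \<partial>(lborel :: complex measure)) = (\<Prod>b\<in>(Basis::complex set). \<integral>\<^sup>+x. ?f b x \<partial>lborel)"
    using nn_integral_lborel_prod[of ?f] by simp
  also have "\<dots> = 1"
  proof -
    have "(\<integral>\<^sup>+x. ennreal (normal_density 0 (sqrt (s2/2)) x) \<partial>lborel) = 1"
      using nn_integral_eq_integral[OF integrable_normal_density[of "sqrt (s2/2)" 0] AE_I2[OF normal_density_nonneg]] integral_normal_density[of "sqrt (s2/2)" 0]
        assms by simp
    then show ?thesis by simp
  qed
  finally show ?thesis .
qed

lemma nn_shift:
  fixes h :: "complex \<Rightarrow> ennreal"
  assumes [measurable]: "h \<in> borel_measurable borel"
  shows "(\<integral>\<^sup>+ y. h y \<partial>lborel) = (\<integral>\<^sup>+ y. h (a + y) \<partial>lborel)"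
proof -
  have "(\<integral>\<^sup>+ y. h y \<partial>lborel) = (\<integral>\<^sup>+ y. h y \<partial>distr lborel borel ((+) a))"
    by (simp add: lborel_distr_plus)
  also have "\<dots> = (\<integral>\<^sup>+ y. h (a + y) \<partial>lborel)"
    by (simp add: nn_integral_distr)
  finally show ?thesis .
qed

lemma cn_shift: "cn_density s2 a (a + y) = cn_density s2 0 y"
  unfolding cn_density_def by simp

lemma cn_meas[measurable]: "(\<lambda>y. cn_density s2 a y) \<in> borel_measurable borel"
  unfolding cn_density_def by measurable

lemma cn_int:
  assumes "s2 > 0"
  shows "(\<integral>\<^sup>+ y. ennreal (cn_density s2 a y) \<partial>(lborel :: complex measure)) = 1"
  by (subst nn_shift[where a=a]) (simp_all add: cn_shift cn_int0 assms)

lemma cn_int_g: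
  assumes [measurable]: "g \<in> borel_measurable borel"
  shows "(\<integral>\<^sup>+ y. ennreal (cn_density s2 a y) * g y \<partial>lborel) = cn_expect s2 g a"
  unfolding cn_expect_def cn_measure_def
  by (subst nn_shift[where a=a]) (simp_all add: cn_shift nn_integral_density)

interpretation cprod: product_sigma_finite "\<lambda>_::nat. (lborel :: complex measure)"
  by standard

lemma chan_dens_meas[measurable]:
  "(\<lambda>y. chan_density s2 n x y) \<in> borel_measurable (cspace n)"
  unfolding chan_density_def cspace_def by measurable

lemma chan_dens_enn:
  assumes "s2 > 0" shows "ennreal (chan_density s2 n x y) = (\<Prod>t\<in>{1..n}. ennreal (cn_density s2 (x t) (y t)))"
  unfolding chan_density_def
  by (subst prod_ennreal) (auto simp: cn_density_def less_imp_le[OF assms] intro!: divide_nonneg_nonneg mult_nonneg_nonneg)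

lemma chan_marg:
  assumes "s2 > 0" and [measurable]: "g \<in> borel_measurable borel" and t: "t \<in> {1..n}"
  shows "(\<integral>\<^sup>+ z. g (z t) \<partial>chan_out s2 n x) = cn_expect s2 g (x t)"
proof -
  let ?h = "\<lambda>s y. ennreal (cn_density s2 (x s) y) * (if s = t then g y else 1)"
  have m: "(\<lambda>z. g (z t)) \<in> borel_measurable (cspace n)"
    unfolding cspace_def using t by measurable
  have "(\<integral>\<^sup>+ z. g (z t) \<partial>chan_out s2 n x) = (\<integral>\<^sup>+ z. ennreal (chan_density s2 n x z) * g (z t) \<partial>cspace n)"
    unfolding chan_out_def by (simp add: nn_integral_density m)
  also have "\<dots> = (\<integral>\<^sup>+ z. (\<Prod>s\<in>{1..n}. ?h s (z s)) \<partial>cspace n)"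
  proof (rule nn_integral_cong)
    fix z
    have "(\<Prod>s\<in>{1..n}. ?h s (z s)) = (\<Prod>s\<in>{1..n}. ennreal (cn_density s2 (x s) (z s))) * (\<Prod>s\<in>{1..n}. if s = t then g (z s) else 1)"
      by (simp add: prod.distrib)
    also have "\<dots> = ennreal (chan_density s2 n x z) * g (z t)"
      using t by (simp add: prod.delta chan_dens_enn assms)
    finally show "ennreal (chan_density s2 n x z) * g (z t) = (\<Prod>s\<in>{1..n}. ?h s (z s))" by simp
  qed
  also have "\<dots> = (\<Prod>s\<in>{1..n}. \<integral>\<^sup>+ y. ?h s y \<partial>lborel)"
    unfolding cspace_def by (rule cprod.product_nn_integral_prod) auto
  also have "\<dots> = (\<Prod>s\<in>{1..n}. if s = t then cn_expect s2 g (x t) else 1)"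
    apply (rule prod.cong, simp)
    subgoal for s by (cases "s = t") (simp_all add: cn_int cn_int_g assms)
    done
  also have "\<dots> = cn_expect s2 g (x t)"
    using t by (simp add: prod.delta)
  finally show ?thesis .
qed

lemma chan_prob:
  assumes "s2 > 0"
  shows "prob_space (chan_out s2 n x)"
proof
  have "emeasure (chan_out s2 n x) (space (chan_out s2 n x)) = (\<integral>\<^sup>+ z. (\<Prod>s\<in>{1..n}. ennreal (cn_density s2 (x s) (z s))) \<partial>cspace n)"
    unfolding chan_out_def
    by (subst emeasure_density[where f="\<lambda>y. ennreal (chan_density s2 n x y)"], measurable, simp) (auto intro!: nn_integral_cong simp: chan_dens_enn assms indicator_def)
  also have "\<dots> = (\<Prod>s\<in>{1..n}. \<integral>\<^sup>+ y. ennreal (cn_density s2 (x s) y) \<partial>lborel)"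
    unfolding cspace_def by (rule cprod.product_nn_integral_prod) auto
  also have "\<dots> = 1" by (simp add: cn_int assms)
  finally show "emeasure (chan_out s2 n x) (space (chan_out s2 n x)) = 1" .
qed

lemma fiber_sum:
  fixes E :: "'a \<Rightarrow> ennreal" and v :: "'b \<Rightarrow> 'a" and x :: "'c \<Rightarrow> 'a"
  assumes "finite T" "finite Ls" "inj_on x Ls" "\<forall>t\<in>T. v t \<in> x ` Ls"
  shows "(\<Sum>t\<in>T. E (v t)) = (\<Sum>l\<in>Ls. of_nat (card {t\<in>T. v t = x l}) * E (x l))"
proof -
  have "(\<Sum>l\<in>Ls. of_nat (card {t\<in>T. v t = x l}) * E (x l))
      = (\<Sum>l\<in>Ls. \<Sum>t\<in>T. if v t = x l then E (v t) else 0)"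
  proof (rule sum.cong[OF refl])
    fix l
    have "(\<Sum>t\<in>T. if v t = x l then E (v t) else 0) = (\<Sum>t\<in>{t\<in>T. v t = x l}. E (v t))"
      by (rule sum.inter_filter[symmetric, OF assms(1)])
    also have "\<dots> = (\<Sum>t\<in>{t\<in>T. v t = x l}. E (x l))" by (rule sum.cong) auto
    finally show "of_nat (card {t\<in>T. v t = x l}) * E (x l) = (\<Sum>t\<in>T. if v t = x l then E (v t) else 0)"
      by simp
  qed
  also have "\<dots> = (\<Sum>t\<in>T. \<Sum>l\<in>Ls. if v t = x l then E (v t) else 0)"
    by (rule sum.swap)
  also have "\<dots> = (\<Sum>t\<in>T. E (v t))"
  proof (rule sum.cong[OF refl])
    fix t assume "t \<in> T"
    then obtain l0 where l0: "l0 \<in> Ls" "v t = x l0" using assms(4) by blast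
    have "(\<Sum>l\<in>Ls. if v t = x l then E (v t) else 0) = (\<Sum>l\<in>Ls. if l0 = l then E (v t) else 0)"
      apply (rule sum.cong[OF refl])
      using l0 assms(3) by (auto simp: inj_on_def)
    also have "\<dots> = E (v t)" using l0 assms(2) by (simp add: sum.delta)
    finally show "(\<Sum>l\<in>Ls. if v t = x l then E (v t) else 0) = E (v t)" .
  qed
  finally show ?thesis by simp
qed

lemma enn_ereal_less:
  assumes "B \<ge> 0"
  shows "(\<not> enn2ereal x < ereal B) \<longleftrightarrow> ennreal B \<le> x"
proof -
  have "ennreal B \<le> x \<longleftrightarrow> enn2ereal (ennreal B) \<le> enn2ereal x"
    by (simp add: less_eq_ennreal.rep_eq)
  then show ?thesis using assms by auto
qed

lemma gbar_meas[measurable]: "(\<lambda>z. gbar g n z) \<in> borel_measurable (cspace n)"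
  if [measurable]: "g \<in> borel_measurable borel"
  unfolding gbar_def cspace_def by measurable

lemma sets_chan_out[measurable_cong]: "sets (chan_out s2 n x) = sets (cspace n)"
  unfolding chan_out_def by simp

lemma msg_bound:
  assumes s2: "s2 > 0" and [measurable]: "g \<in> borel_measurable borel" and B: "B > 0"
  shows "ennreal (B * (1 - outage s2 n g B u i)) \<le> ennreal (1/real n) * (\<Sum>t\<in>{1..n}. cn_expect s2 g (u i t))"
    and "outage s2 n g B u i \<le> 1"
proof -
  let ?\<mu> = "chan_out s2 n (u i)"
  interpret prob_space ?\<mu> by (rule chan_prob[OF s2])
  have sp: "space ?\<mu> = space (cspace n)" unfolding chan_out_def by simp
  define S where "S = {z \<in> space (cspace n). enn2ereal (gbar g n z) < ereal B}"
  define C where "C = {z \<in> space (cspace n). ennreal B \<le> gbar g n z}"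
  have Ssets: "S \<in> events" unfolding S_def by measurable
  have Csets: "C \<in> events" unfolding C_def by measurable
  have SC: "space ?\<mu> - S = C" unfolding S_def C_def sp using enn_ereal_less[of B] B by auto
  have th: "outage s2 n g B u i = prob S" unfolding outage_def S_def by simp
  show "outage s2 n g B u i \<le> 1" unfolding th by simp
  have pc: "prob C = 1 - outage s2 n g B u i" unfolding th SC[symmetric] by (rule prob_compl[OF Ssets])
  have "ennreal B * emeasure ?\<mu> C = (\<integral>\<^sup>+ z. ennreal B * indicator C z \<partial>?\<mu>)"
    by (rule nn_integral_cmult_indicator[symmetric, OF Csets])
  also have "\<dots> \<le> (\<integral>\<^sup>+ z. gbar g n z \<partial>?\<mu>)"
    by (rule nn_integral_mono) (auto simp: indicator_def C_def sp)
  also have "\<dots> = ennreal (1/real n) * (\<Sum>t\<in>{1..n}. \<integral>\<^sup>+ z. g (z t) \<partial>?\<mu>)"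
    unfolding gbar_def
    apply (subst nn_integral_cmult)
     apply (measurable; unfold cspace_def; measurable)
    apply (subst nn_integral_sum)
     apply (measurable; unfold cspace_def; measurable)
    apply simp
    done
  also have "\<dots> = ennreal (1/real n) * (\<Sum>t\<in>{1..n}. cn_expect s2 g (u i t))"
    by (simp add: chan_marg[OF s2])
  finally have "ennreal B * emeasure ?\<mu> C \<le> ennreal (1/real n) * (\<Sum>t\<in>{1..n}. cn_expect s2 g (u i t))" .
  moreover have "ennreal B * emeasure ?\<mu> C = ennreal (B * (1 - outage s2 n g B u i))"
    using B by (simp add: emeasure_eq_measure pc ennreal_mult')
  ultimately show "ennreal (B * (1 - outage s2 n g B u i)) \<le> ennreal (1/real n) * (\<Sum>t\<in>{1..n}. cn_expect s2 g (u i t))"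
    by simp
qed

theorem lemma1:
  fixes n M L :: nat and x :: "nat \<Rightarrow> complex" and s2 P \<epsilon> B \<delta> :: real
    and g :: "complex \<Rightarrow> ennreal"
    and u :: "nat \<Rightarrow> nat \<Rightarrow> complex" and D :: "nat \<Rightarrow> (nat \<Rightarrow> complex) set"
  assumes "n \<ge> 1" and "M \<ge> 1"
    and "inj_on x {1..L}"
    and "s2 > 0" and "P > 0"
    and "g \<in> borel_measurable borel"
    and "\<epsilon> > 0" and "\<delta> < 1"
    and "is_energy_code (x ` {1..L}) P s2 n M \<epsilon> g B \<delta> u D"
  shows "ereal B \<le> enn2ereal (ennreal (1 / (1 - \<delta>)) *
           (\<Sum>l\<in>{1..L}. ennreal (type_code n M u (x l)) * cn_expect s2 g (x l)))"
proof (cases "B \<le> 0")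
  case True
  have "ereal B \<le> 0" using True by simp
  also have "0 \<le> enn2ereal (ennreal (1 / (1 - \<delta>)) *
           (\<Sum>l\<in>{1..L}. ennreal (type_code n M u (x l)) * cn_expect s2 g (x l)))" by simp
  finally show ?thesis .
next
  case False
  then have B: "B > 0" by simp
  note s2 = assms(4) and gm = assms(6)
  from assms(9) have code: "\<forall>i\<in>{1..M}. \<forall>t\<in>{1..n}. u i t \<in> x ` {1..L}"
    and avg: "avg_outage s2 n M g B u < \<delta>"
    unfolding is_energy_code_def is_err_code_def is_code_def by auto
  define E where "E = cn_expect s2 g"
  define \<theta> where "\<theta> = outage s2 n g B u"
  define R where "R = (\<Sum>l\<in>{1..L}. ennreal (type_code n M u (x l)) * E (x l))"
  define c where "c = (\<lambda>i l. card {t\<in>{1..n}. u i t = x l})"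
  have th1: "\<theta> i \<le> 1" for i unfolding \<theta>_def by (rule msg_bound(2)[OF s2 gm B])
  have step1: "ennreal (B * (1 - \<theta> i)) \<le> ennreal (1/real n) * (\<Sum>t\<in>{1..n}. E (u i t))" for i
    unfolding \<theta>_def E_def by (rule msg_bound(1)[OF s2 gm B])
  have "ennreal (\<Sum>i\<in>{1..M}. B * (1 - \<theta> i)) = (\<Sum>i\<in>{1..M}. ennreal (B * (1 - \<theta> i)))"
    using B th1 by (subst sum_ennreal) auto
  also have "\<dots> \<le> (\<Sum>i\<in>{1..M}. ennreal (1/real n) * (\<Sum>t\<in>{1..n}. E (u i t)))"
    by (rule sum_mono) (rule step1)
  finally have s1: "ennreal (\<Sum>i\<in>{1..M}. B * (1 - \<theta> i)) \<le> (\<Sum>i\<in>{1..M}. ennreal (1/real n) * (\<Sum>t\<in>{1..n}. E (u i t)))" .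
  have realeq: "(1/real M) * (\<Sum>i\<in>{1..M}. B * (1 - \<theta> i)) = B * (1 - avg_outage s2 n M g B u)"
    using assms(2) unfolding avg_outage_def \<theta>_def
    by (simp add: sum_subtractf sum_distrib_left[symmetric] field_simps)
  have fib: "(\<Sum>t\<in>{1..n}. E (u i t)) = (\<Sum>l\<in>{1..L}. of_nat (c i l) * E (x l))" if "i \<in> {1..M}" for i
    unfolding c_def by (rule fiber_sum) (use assms(3) code that in auto)
  have tc: "ennreal (type_code n M u (x l)) = ennreal (1/real M) * (\<Sum>i\<in>{1..M}. ennreal (1/real n) * of_nat (c i l))" for l
  proof -
    have a: "(\<Sum>i\<in>{1..M}. ennreal (1/real n) * of_nat (c i l)) = ennreal (\<Sum>i\<in>{1..M}. 1/real n * real (c i l))"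
    proof -
      have "ennreal (\<Sum>i\<in>{1..M}. 1/real n * real (c i l)) = (\<Sum>i\<in>{1..M}. ennreal (1/real n * real (c i l)))"
        by (rule sum_ennreal[symmetric]) simp
      also have "\<dots> = (\<Sum>i\<in>{1..M}. ennreal (1/real n) * of_nat (c i l))"
        apply (rule sum.cong[OF refl])
        apply (subst ennreal_mult')
         apply simp
        apply (simp add: ennreal_of_nat_eq_real_of_nat)
        done
      finally show ?thesis by simp
    qed
    have b: "type_code n M u (x l) = 1/real M * (\<Sum>i\<in>{1..M}. 1/real n * real (c i l))"
      unfolding type_code_def type_cw_def c_def by simp
    show ?thesis unfolding a b by (subst ennreal_mult') simp_all
  qed
  have Rexp: "R = ennreal (1/real M) * (\<Sum>i\<in>{1..M}. ennreal (1/real n) * (\<Sum>t\<in>{1..n}. E (u i t)))"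
  proof -
    have "ennreal (1/real M) * (\<Sum>i\<in>{1..M}. ennreal (1/real n) * (\<Sum>t\<in>{1..n}. E (u i t)))
        = ennreal (1/real M) * (\<Sum>i\<in>{1..M}. ennreal (1/real n) * (\<Sum>l\<in>{1..L}. of_nat (c i l) * E (x l)))"
      by (rule arg_cong[where f="\<lambda>z. ennreal (1/real M) * z"], rule sum.cong[OF refl]) (metis fib)
    also have "\<dots> = (\<Sum>l\<in>{1..L}. \<Sum>i\<in>{1..M}. ennreal (1/real M) * (ennreal (1/real n) * of_nat (c i l)) * E (x l))"
      by (subst sum.swap) (simp add: sum_distrib_left mult.assoc)
    also have "\<dots> = R"
      unfolding R_def tc by (simp add: sum_distrib_left sum_distrib_right mult.assoc)
    finally show ?thesis by simp
  qed
  have "ennreal (B * (1 - avg_outage s2 n M g B u)) = ennreal (1/real M) * ennreal (\<Sum>i\<in>{1..M}. B * (1 - \<theta> i))"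
    unfolding realeq[symmetric] by (subst ennreal_mult') simp_all
  also have "\<dots> \<le> R" unfolding Rexp by (rule mult_left_mono[OF s1]) simp
  finally have s2': "ennreal (B * (1 - avg_outage s2 n M g B u)) \<le> R" .
  have "B * (1 - \<delta>) \<le> B * (1 - avg_outage s2 n M g B u)"
    using B avg by (intro mult_left_mono) auto
  then have "ennreal (B * (1 - \<delta>)) \<le> R" using s2' by (meson ennreal_leI order_trans)
  then have "ennreal (1 / (1 - \<delta>)) * ennreal (B * (1 - \<delta>)) \<le> ennreal (1 / (1 - \<delta>)) * R"
    by (rule mult_left_mono) simp
  moreover have "ennreal (1 / (1 - \<delta>)) * ennreal (B * (1 - \<delta>)) = ennreal B"
    using assms(8) B by (simp add: ennreal_mult'[symmetric])
  ultimately have "ennreal B \<le> ennreal (1 / (1 - \<delta>)) * R" by simp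
  then have "enn2ereal (ennreal B) \<le> enn2ereal (ennreal (1 / (1 - \<delta>)) * R)"
    by (simp add: less_eq_ennreal.rep_eq)
  then show ?thesis using B unfolding R_def E_def by simp
qed

end
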